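(* Let $u$ be a smooth solution of the equivariant Skyrme equation in $\Omega$ with $u(t,0)=0$, and let $(t_n)_n\subset(0,T_0]$ be a sequence with $t_n\to0$ and \[ \lim_{n\to\infty}\int_0^{t_n}\frac{\sin^2u(t_n,r)}{r^2}\,u_r(t_n,r)^2\,r\,dr=0. \] Then there are constants $C_n$ with $C_n\to0$ as $n\to\infty$ such that $|u(t_n,r)|\le C_n\,r^{1/2}$ for all $0\le r\le t_n$ (for all $n$ sufficiently large).
   Context: Fix $\alpha>0$, $T_0>0$. The equivariant Skyrme equation is \[ \Big(1+\tfrac{\alpha^2\sin^2u}{r^2}\Big)(u_{tt}-u_{rr}) - \Big(1-\tfrac{\alpha^2\sin^2u}{r^2}\Big)\tfrac{u_r}{r} + \tfrac{\sin 2u}{2r^2}\big[\alpha^2(u_t^2-u_r^2)+1\big]=0. \] $\Omega=\{(t,r):0<t\le T_0,\ 0\le r\le t\}$; a smooth solution in $\Omega$ is a smooth function on $\Omega$ satisfying the equation for $r>0$. *)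

theory Defs
  imports "HOL-Analysis.Analysis"
begin

definition Omega :: "real \<Rightarrow> (real \<times> real) set" where
  "Omega T0 = {(t, r). 0 < t \<and> t \<le> T0 \<and> 0 \<le> r \<and> r \<le> t}"

text \<open>C-infinity on an open set U of R^2: f lies in a family of functions, each
  of which is (Frechet) differentiable on U with both partial derivatives again in
  the family.\<close>
definition smooth_on :: "(real \<times> real) set \<Rightarrow> (real \<times> real \<Rightarrow> real) \<Rightarrow> bool" where
  "smooth_on U f \<longleftrightarrow> (\<exists>S. f \<in> S \<and>
     (\<forall>g\<in>S. \<exists>g1\<in>S. \<exists>g2\<in>S. \<forall>x\<in>U.
        (g has_derivative (\<lambda>(h, k). g1 x * h + g2 x * k)) (at x)))"

definition skyrme_lhs :: "real \<Rightarrow> (real \<Rightarrow> real \<Rightarrow> real) \<Rightarrow> real \<Rightarrow> real \<Rightarrow> real" where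
  "skyrme_lhs \<alpha> v t r =
    (let u = v t r;
         ut = deriv (\<lambda>s. v s r) t;
         ur = deriv (\<lambda>x. v t x) r;
         utt = deriv (\<lambda>s. deriv (\<lambda>s'. v s' r) s) t;
         urr = deriv (\<lambda>x. deriv (\<lambda>x'. v t x') x) r
     in (1 + \<alpha>\<^sup>2 * (sin u)\<^sup>2 / r\<^sup>2) * (utt - urr)
        - (1 - \<alpha>\<^sup>2 * (sin u)\<^sup>2 / r\<^sup>2) * ur / r
        + sin (2 * u) / (2 * r\<^sup>2) * (\<alpha>\<^sup>2 * (ut\<^sup>2 - ur\<^sup>2) + 1))"

definition smooth_skyrme_solution :: "real \<Rightarrow> real \<Rightarrow> (real \<Rightarrow> real \<Rightarrow> real) \<Rightarrow> bool" where
  "smooth_skyrme_solution \<alpha> T0 u \<longleftrightarrow>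
    (\<exists>U v. open U \<and> Omega T0 \<subseteq> U \<and> smooth_on U (\<lambda>(t, r). v t r) \<and>
       (\<forall>t r. (t, r) \<in> Omega T0 \<longrightarrow> v t r = u t r) \<and>
       (\<forall>t r. (t, r) \<in> Omega T0 \<longrightarrow> 0 < r \<longrightarrow> skyrme_lhs \<alpha> v t r = 0))"

end

theory Submission
  imports Defs
begin


lemma cos_ge_aux1: "(0::real) \<le> x \<Longrightarrow> 1 - x^2/2 \<le> cos x"
proof -
  assume x: "0 \<le> x"
  let ?f = "\<lambda>x::real. cos x - 1 + x^2/2"
  have "?f 0 \<le> ?f x"
  proof (rule DERIV_nonneg_imp_nondecreasing[OF x])
    fix u :: real assume u: "0 \<le> u" "u \<le> x"
    have "DERIV ?f u :> (- sin u + u)" by (auto intro!: derivative_eq_intros)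
    moreover have "- sin u + u \<ge> 0" using sin_x_le_x[OF u(1)] by simp
    ultimately show "\<exists>y. DERIV ?f u :> y \<and> 0 \<le> y" by blast
  qed
  then show ?thesis by simp
qed

lemma sin_ge_aux: "(0::real) \<le> x \<Longrightarrow> x - x^3/6 \<le> sin x"
proof -
  assume x: "0 \<le> x"
  let ?f = "\<lambda>x::real. sin x - x + x^3/6"
  have "?f 0 \<le> ?f x"
  proof (rule DERIV_nonneg_imp_nondecreasing[OF x])
    fix u :: real assume u: "0 \<le> u" "u \<le> x"
    have "DERIV ?f u :> (cos u - 1 + u^2/2)" by (auto intro!: derivative_eq_intros simp: power2_eq_square)
    moreover have "cos u - 1 + u^2/2 \<ge> 0" using cos_ge_aux1[OF u(1)] by simp
    ultimately show "\<exists>y. DERIV ?f u :> y \<and> 0 \<le> y" by blast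
  qed
  then show ?thesis by simp
qed

lemma cos_le_aux: "(0::real) \<le> x \<Longrightarrow> x^2/2 - x^4/24 \<le> 1 - cos x"
proof -
  assume x: "0 \<le> x"
  let ?f = "\<lambda>x::real. 1 - cos x - x^2/2 + x^4/24"
  have "?f 0 \<le> ?f x"
  proof (rule DERIV_nonneg_imp_nondecreasing[OF x])
    fix u :: real assume u: "0 \<le> u" "u \<le> x"
    have "DERIV ?f u :> (sin u - u + u^3/6)" by (auto intro!: derivative_eq_intros)
    moreover have "sin u - u + u^3/6 \<ge> 0" using sin_ge_aux[OF u(1)] by simp
    ultimately show "\<exists>y. DERIV ?f u :> y \<and> 0 \<le> y" by blast
  qed
  then show ?thesis by simp
qed

lemma cos_sq_bound: "\<bar>x::real\<bar> \<le> 2 \<Longrightarrow> x^2 \<le> 3 * (1 - cos x)"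
proof -
  assume a: "\<bar>x\<bar> \<le> 2"
  have c: "cos \<bar>x\<bar> = cos x" by (simp add: abs_if)
  have h1: "\<bar>x\<bar>^2/2 - \<bar>x\<bar>^4/24 \<le> 1 - cos x" using cos_le_aux[of "\<bar>x\<bar>"] unfolding c by simp
  have sq: "\<bar>x\<bar>^2 \<le> 2^2" using power_mono[OF a, of 2] by simp
  have "\<bar>x\<bar>^4 = \<bar>x\<bar>^2 * \<bar>x\<bar>^2" by (simp add: power4_eq_xxxx power2_eq_square)
  also have "\<dots> \<le> 4 * \<bar>x\<bar>^2" using sq by (intro mult_right_mono) auto
  finally have h2: "\<bar>x\<bar>^4 \<le> 4 * \<bar>x\<bar>^2" .
  have e: "\<bar>x\<bar>^2 = x^2" by simp
  have key: "\<And>A B c::real. A/2 - B/24 \<le> c \<Longrightarrow> B \<le> 4*A \<Longrightarrow> A \<le> 3*c" by linarith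
  show ?thesis using key[OF h1[unfolded e] h2[unfolded e]] .
qed


lemma amgm_aux:
  fixes a s l :: real
  assumes "0 < s" "0 < l"
  shows "a \<le> l * (a^2 / s) / 2 + s / (2 * l)"
proof -
  have "l * (a^2 / s) / 2 + s / (2 * l) - a = (l * a - s)^2 / (2 * l * s)"
    using assms by (simp add: field_simps power2_eq_square)
  moreover have "(l * a - s)^2 / (2 * l * s) \<ge> 0" using assms by simp
  ultimately show ?thesis by linarith
qed

lemma hhat_cont:
  fixes \<phi> p :: "real \<Rightarrow> real" and T :: real
  assumes T: "0 < T"
  and d: "\<And>s. s \<in> {0..T} \<Longrightarrow> (\<phi> has_real_derivative p s) (at s)"
  and pc: "continuous_on {0..T} p"
  and z: "\<phi> 0 = 0"
  shows "continuous_on {0..T} (\<lambda>s. (sin (\<phi> s))^2 / s^2 * (p s)^2 * s)"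
proof -
  define q where "q s = (if s = 0 then p 0 else sin (\<phi> s) / s)" for s
  have d0: "((\<lambda>s. sin (\<phi> s)) has_real_derivative cos (\<phi> 0) * p 0) (at 0)"
    using d[of 0] T by (auto intro!: derivative_eq_intros)
  then have "((\<lambda>y. (sin (\<phi> y) - sin (\<phi> 0)) / (y - 0)) \<longlongrightarrow> cos (\<phi> 0) * p 0) (at 0)"
    by (simp only: has_field_derivative_iff)
  then have lim: "((\<lambda>y. sin (\<phi> y) / y) \<longlongrightarrow> p 0) (at 0)" using z by simp
  have "continuous (at x) q" if x: "x \<in> {0..T}" for x
  proof (cases "x = 0")
    case True
    have ev: "eventually (\<lambda>y. sin (\<phi> y) / y = q y) (at 0)"
      by (simp add: eventually_at_filter q_def)
    have "(q \<longlongrightarrow> p 0) (at 0)"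
      using tendsto_cong[OF ev] lim by blast
    moreover have "q 0 = p 0" by (simp add: q_def)
    ultimately have "(q \<longlongrightarrow> q 0) (at 0)" by simp
    then show ?thesis using True by (simp add: isCont_def)
  next
    case False
    have ic: "isCont \<phi> x" using d[OF x] by (rule DERIV_isCont)
    have "isCont (\<lambda>y. sin (\<phi> y) / y) x"
      using ic False by (auto intro!: continuous_intros)
    moreover have "eventually (\<lambda>y. q y = sin (\<phi> y) / y) (nhds x)"
      using t1_space_nhds[OF False] by eventually_elim (simp add: q_def)
    ultimately show ?thesis using isCont_cong[of q "\<lambda>y. sin (\<phi> y) / y" x] by simp
  qed
  then have qc: "continuous_on {0..T} q"
    by (simp add: continuous_at_imp_continuous_on)
  have "continuous_on {0..T} (\<lambda>s. (q s)^2 * (p s)^2 * s)"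
    by (intro continuous_intros qc pc)
  moreover have "(q s)^2 * (p s)^2 * s = (sin (\<phi> s))^2 / s^2 * (p s)^2 * s" if "s \<in> {0..T}" for s
    by (cases "s = 0") (simp_all add: q_def power_divide)
  ultimately show ?thesis using continuous_on_cong by (metis (no_types, lifting))
qed

lemma key:
  fixes \<phi> p :: "real \<Rightarrow> real" and T \<delta> :: real
  assumes T: "0 < T" and \<delta>: "0 < \<delta>"
  and d: "\<And>s. s \<in> {0..T} \<Longrightarrow> (\<phi> has_real_derivative p s) (at s)"
  and pc: "continuous_on {0..T} p"
  and z: "\<phi> 0 = 0"
  and E: "integral {0..T} (\<lambda>s. (sin (\<phi> s))^2 / s^2 * (p s)^2 * s) \<le> \<delta>^2"
  shows "\<forall>r\<in>{0..T}. 1 - cos (\<phi> r) \<le> r * \<delta>"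
proof
  fix r assume r: "r \<in> {0..T}"
  define h where "h s = (sin (\<phi> s))^2 / s^2 * (p s)^2 * s" for s
  have hc: "continuous_on {0..T} h" unfolding h_def by (rule hhat_cont[OF T d pc z])
  have hiT: "h integrable_on {0..T}" by (rule integrable_continuous_real[OF hc])
  have hir: "h integrable_on {0..r}" using hiT r by (intro integrable_on_subinterval) auto
  have hpos: "\<forall>x\<in>{0..T}. 0 \<le> h x" by (auto simp: h_def)
  have Ir: "integral {0..r} h \<le> \<delta>^2"
    using integral_subset_le[of "{0..r}" "{0..T}" h, OF _ hir hiT hpos] r E
    unfolding h_def[symmetric] by auto
  show "1 - cos (\<phi> r) \<le> r * \<delta>"
  proof (cases "r = 0")
    case True then show ?thesis using z by simp
  next
    case False
    then have rp: "0 < r" using r by auto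
    define l where "l = r / \<delta>"
    have lp: "0 < l" using rp \<delta> by (simp add: l_def)
    have ftc: "((\<lambda>s. sin (\<phi> s) * p s) has_integral ((1 - cos (\<phi> r)) - (1 - cos (\<phi> 0)))) {0..r}"
    proof (rule fundamental_theorem_of_calculus)
      show "0 \<le> r" using rp by simp
      fix x assume x: "x \<in> {0..r}"
      then have "x \<in> {0..T}" using r by auto
      then have "((\<lambda>s. 1 - cos (\<phi> s)) has_real_derivative sin (\<phi> x) * p x) (at x)"
        using d by (auto intro!: derivative_eq_intros)
      then show "((\<lambda>s. 1 - cos (\<phi> s)) has_vector_derivative sin (\<phi> x) * p x) (at x within {0..r})"
        by (simp add: has_real_derivative_iff_has_vector_derivative[symmetric] has_field_derivative_at_within)
    qed
    have rhs: "((\<lambda>s. l / 2 * h s + r / (2 * l)) has_integral (l / 2 * integral {0..r} h + measure lborel {0..r} *\<^sub>R (r / (2 * l)))) {0..r}"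
      by (intro has_integral_add has_integral_mult_right has_integral_const_real integrable_integral hir)
    have le: "sin (\<phi> s) * p s \<le> l / 2 * h s + r / (2 * l)" if s: "s \<in> {0..r}" for s
    proof (cases "s = 0")
      case True then show ?thesis using z lp rp by (simp add: h_def)
    next
      case False
      then have sp: "0 < s" using s by auto
      have "h s = (sin (\<phi> s) * p s)^2 / s" using sp by (simp add: h_def power2_eq_square field_simps)
      then have "sin (\<phi> s) * p s \<le> l * h s / 2 + s / (2 * l)"
        using amgm_aux[OF sp lp, of "sin (\<phi> s) * p s"] by simp
      moreover have "s / (2 * l) \<le> r / (2 * l)" using s lp by (simp add: divide_right_mono)
      ultimately show ?thesis by simp
    qed
    have "1 - cos (\<phi> r) \<le> l / 2 * integral {0..r} h + r * (r / (2 * l))"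
      using has_integral_le[OF ftc rhs le] z rp by simp
    also have "l / 2 * integral {0..r} h \<le> l / 2 * \<delta>^2"
      using Ir lp by (simp add: mult_left_mono)
    also have "l / 2 * \<delta>^2 + r * (r / (2 * l)) = r * \<delta>"
      using \<delta> rp by (simp add: l_def field_simps power2_eq_square)
    finally show ?thesis by simp
  qed
qed

lemma phi_bound:
  fixes \<phi> p :: "real \<Rightarrow> real" and T \<delta> :: real
  assumes T: "0 < T" and \<delta>: "0 < \<delta>"
  and d: "\<And>s. s \<in> {0..T} \<Longrightarrow> (\<phi> has_real_derivative p s) (at s)"
  and z: "\<phi> 0 = 0"
  and c: "\<forall>r\<in>{0..T}. 1 - cos (\<phi> r) \<le> r * \<delta>"
  and small: "T * \<delta> \<le> 1/2"
  shows "\<forall>r\<in>{0..T}. \<bar>\<phi> r\<bar> \<le> sqrt (3 * \<delta>) * sqrt r"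
proof
  fix r assume r: "r \<in> {0..T}"
  have cont: "\<forall>x. 0 \<le> x \<and> x \<le> r \<longrightarrow> isCont \<phi> x"
  proof (intro allI impI)
    fix x assume "0 \<le> x \<and> x \<le> r"
    then have "x \<in> {0..T}" using r by auto
    then show "isCont \<phi> x" using d by (blast intro: DERIV_isCont)
  qed
  have nohit: False if x: "x \<in> {0..T}" and cx: "cos (\<phi> x) = 0" for x
  proof -
    have "1 - cos (\<phi> x) \<le> x * \<delta>" using c x by blast
    then have "1 \<le> x * \<delta>" using cx by simp
    also have "\<dots> \<le> T * \<delta>" using x \<delta> by (auto intro: mult_right_mono)
    finally show False using small by simp
  qed
  have lt: "\<bar>\<phi> r\<bar> < pi / 2"
  proof (rule ccontr)
    assume "\<not> \<bar>\<phi> r\<bar> < pi / 2"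
    then consider "\<phi> r \<ge> pi/2" | "\<phi> r \<le> - (pi/2)" by linarith
    then show False
    proof cases
      case 1
      then obtain x where x: "0 \<le> x" "x \<le> r" "\<phi> x = pi/2"
        using IVT[of \<phi> 0 "pi/2" r] z r cont by auto
      have "cos (\<phi> x) = 0" by (simp only: x(3) cos_minus cos_pi_half)
      then show False using nohit[of x] r x by auto
    next
      case 2
      then obtain x where x: "0 \<le> x" "x \<le> r" "\<phi> x = - (pi/2)"
        using IVT2[of \<phi> r "- (pi/2)" 0] z r cont by auto
      have "cos (\<phi> x) = 0" by (simp only: x(3) cos_minus cos_pi_half)
      then show False using nohit[of x] r x by auto
    qed
  qed
  then have "\<bar>\<phi> r\<bar> \<le> 2" using pi_half_less_two by linarith
  then have "(\<phi> r)^2 \<le> 3 * (1 - cos (\<phi> r))" by (rule cos_sq_bound)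
  also have "\<dots> \<le> 3 * (r * \<delta>)"
  proof -
    have "1 - cos (\<phi> r) \<le> r * \<delta>" using c r by blast
    then show ?thesis by (rule mult_left_mono) simp
  qed
  finally have sq: "(\<phi> r)^2 \<le> 3 * \<delta> * r" by (simp add: mult_ac)
  have "sqrt ((\<phi> r)^2) \<le> sqrt (3 * \<delta> * r)" by (rule real_sqrt_le_mono[OF sq])
  then show "\<bar>\<phi> r\<bar> \<le> sqrt (3 * \<delta>) * sqrt r" by (simp add: real_sqrt_mult)
qed

theorem mainTheorem6:
  fixes \<alpha> T0 :: real and u :: "real \<Rightarrow> real \<Rightarrow> real" and t :: "nat \<Rightarrow> real"
  assumes "\<alpha> > 0" and "T0 > 0"
    and "smooth_skyrme_solution \<alpha> T0 u"
    and "\<forall>s. 0 < s \<and> s \<le> T0 \<longrightarrow> u s 0 = 0"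
    and "\<forall>n. 0 < t n \<and> t n \<le> T0"
    and "t \<longlonglongrightarrow> 0"
    and "(\<lambda>n. integral {0..t n}
            (\<lambda>r. (sin (u (t n) r))\<^sup>2 / r\<^sup>2 * (deriv (u (t n)) r)\<^sup>2 * r)) \<longlonglongrightarrow> 0"
  shows "\<exists>C :: nat \<Rightarrow> real. C \<longlonglongrightarrow> 0 \<and>
           (\<forall>\<^sub>F n in sequentially. \<forall>r. 0 \<le> r \<and> r \<le> t n \<longrightarrow> \<bar>u (t n) r\<bar> \<le> C n * sqrt r)"
proof -
  note tn = assms(5)
  obtain U v where oU: "open U" and OU: "Omega T0 \<subseteq> U"
    and sm: "smooth_on U (\<lambda>(t, r). v t r)"
    and agree: "\<forall>t r. (t, r) \<in> Omega T0 \<longrightarrow> v t r = u t r"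
    using assms(3) unfolding smooth_skyrme_solution_def by blast
  obtain S where fS: "(\<lambda>(t, r). v t r) \<in> S"
    and SP: "\<forall>g\<in>S. \<exists>g1\<in>S. \<exists>g2\<in>S. \<forall>x\<in>U.
        (g has_derivative (\<lambda>(h, k). g1 x * h + g2 x * k)) (at x)"
    using sm unfolding smooth_on_def by blast
  obtain g1 g2 where g2S: "g2 \<in> S" and der: "\<forall>x\<in>U.
        ((\<lambda>(t, r). v t r) has_derivative (\<lambda>(h, k). g1 x * h + g2 x * k)) (at x)"
    using SP fS by blast
  obtain g21 g22 where der2: "\<forall>x\<in>U.
        (g2 has_derivative (\<lambda>(h, k). g21 x * h + g22 x * k)) (at x)"
    using SP g2S by blast
  have g2c: "continuous_on U g2"
    using der2 by (intro continuous_at_imp_continuous_on) (auto intro: has_derivative_continuous)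
  have inO: "(T, s) \<in> Omega T0" if "0 < T" "T \<le> T0" "s \<in> {0..T}" for T s
    using that by (auto simp: Omega_def)
  have dv: "((\<lambda>s. v T s) has_real_derivative g2 (T, s)) (at s)"
    if "(T, s) \<in> U" for T s
  proof -
    have p: "((\<lambda>s. (T, s)) has_derivative (\<lambda>k. (0, k))) (at s)"
      by (auto intro!: derivative_eq_intros)
    have "((\<lambda>s. (\<lambda>(t, r). v t r) (T, s)) has_derivative
             (\<lambda>k. (\<lambda>(h, k). g1 (T, s) * h + g2 (T, s) * k) (0, k))) (at s)"
      by (rule has_derivative_compose[OF p]) (use der that in auto)
    then show ?thesis by (simp add: has_field_derivative_def)
  qed
  have step: "\<exists>\<delta>0. True" by simp
  define E where "E n = integral {0..t n}
            (\<lambda>r. (sin (u (t n) r))\<^sup>2 / r\<^sup>2 * (deriv (u (t n)) r)\<^sup>2 * r)" for n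
  define \<delta> where "\<delta> n = sqrt \<bar>E n\<bar> + inverse (real (Suc n))" for n
  have \<delta>pos: "0 < \<delta> n" for n
    unfolding \<delta>_def by (intro add_nonneg_pos) auto
  have \<delta>lim: "\<delta> \<longlonglongrightarrow> 0"
  proof -
    have "(\<lambda>n. sqrt \<bar>E n\<bar> + inverse (real (Suc n))) \<longlonglongrightarrow> sqrt \<bar>0\<bar> + 0"
      using assms(7) unfolding E_def
      by (intro tendsto_add tendsto_real_sqrt tendsto_rabs LIMSEQ_inverse_real_of_nat)
    then show ?thesis by (simp add: \<delta>_def[abs_def])
  qed
  define C where "C n = sqrt (3 * \<delta> n)" for n
  have Clim: "C \<longlonglongrightarrow> 0"
  proof -
    have "(\<lambda>n. sqrt (3 * \<delta> n)) \<longlonglongrightarrow> sqrt (3 * 0)"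
      by (intro tendsto_real_sqrt tendsto_mult \<delta>lim tendsto_const)
    then show ?thesis by (simp add: C_def[abs_def])
  qed
  have "(\<lambda>n. t n * \<delta> n) \<longlonglongrightarrow> 0 * 0"
    by (intro tendsto_mult assms(6) \<delta>lim)
  then have ev: "\<forall>\<^sub>F n in sequentially. t n * \<delta> n < 1/2"
    by (intro order_tendstoD(2)) auto
  have main: "\<forall>r. 0 \<le> r \<and> r \<le> t n \<longrightarrow> \<bar>u (t n) r\<bar> \<le> C n * sqrt r"
    if small: "t n * \<delta> n < 1/2" for n
  proof -
    define T where "T = t n"
    have T: "0 < T" "T \<le> T0" using tn by (auto simp: T_def)
    define \<phi> where "\<phi> s = v T s" for s
    define p where "p s = g2 (T, s)" for s
    have d: "(\<phi> has_real_derivative p s) (at s)" if "s \<in> {0..T}" for s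
      unfolding \<phi>_def[abs_def] p_def using dv inO[OF T that] OU by blast
    have pc: "continuous_on {0..T} p"
      unfolding p_def
      by (rule continuous_on_compose2[OF g2c]) (use inO[OF T] OU in \<open>auto intro!: continuous_intros\<close>)
    have z: "\<phi> 0 = 0"
      using agree inO[OF T, of 0] assms(4) T by (simp add: \<phi>_def)
    have Eeq: "E n = integral {0..T} (\<lambda>s. (sin (\<phi> s))^2 / s^2 * (p s)^2 * s)"
      unfolding E_def T_def[symmetric]
    proof (rule integral_spike[of "{0, T}"])
      show "negligible {0, T}" by simp
      fix x assume x: "x \<in> {0..T} - {0, T}"
      then have x': "x \<in> {0<..<T}" by auto
      have "(u T has_real_derivative p x) (at x)"
      proof (rule has_field_derivative_transform_within_open[OF d[of x] _ x'])
        show "x \<in> {0..T}" using x by auto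
        show "open {0<..<T}" by simp
        fix y assume "y \<in> {0<..<T}"
        then show "\<phi> y = u T y" using agree inO[OF T, of y] by (auto simp: \<phi>_def)
      qed
      then have "deriv (u T) x = p x" by (rule DERIV_imp_deriv)
      moreover have "u T x = \<phi> x" using agree inO[OF T, of x] x by (auto simp: \<phi>_def)
      ultimately show "(sin (\<phi> x))^2 / x^2 * (p x)^2 * x = (sin (u T x))\<^sup>2 / x\<^sup>2 * (deriv (u T) x)\<^sup>2 * x"
        by simp
    qed
    have Ele: "E n \<le> (\<delta> n)^2"
    proof -
      have "E n \<le> \<bar>E n\<bar>" by simp
      also have "\<dots> = (sqrt \<bar>E n\<bar>)^2" by simp
      also have "\<dots> \<le> (\<delta> n)^2"
        unfolding \<delta>_def by (intro power_mono) auto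
      finally show ?thesis .
    qed
    have c: "\<forall>r\<in>{0..T}. 1 - cos (\<phi> r) \<le> r * \<delta> n"
      by (rule key[OF T(1) \<delta>pos d pc z]) (use Ele Eeq in auto)
    have b: "\<forall>r\<in>{0..T}. \<bar>\<phi> r\<bar> \<le> sqrt (3 * \<delta> n) * sqrt r"
      by (rule phi_bound[OF T(1) \<delta>pos d z c]) (use small T_def in auto)
    show ?thesis
    proof (intro allI impI)
      fix r assume r: "0 \<le> r \<and> r \<le> t n"
      then have "u (t n) r = \<phi> r" using agree inO[OF T, of r] by (auto simp: \<phi>_def T_def)
      then show "\<bar>u (t n) r\<bar> \<le> C n * sqrt r" using b r by (auto simp: C_def T_def)
    qed
  qed
  show ?thesis
    by (rule exI[of _ C]) (use Clim ev main in \<open>auto elim: eventually_mono\<close>)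
qed

end
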